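(* Consider the two-stage cooperative cellular/D2D recovery model described in the context, with lossless links in the second stage. For any network coding scheme used in the second stage, the packet completion time satisfies \[ T \geq \left\lceil \max\Big(|\mathcal{M}_c|,\ \tfrac{1}{2}\max_{n \in \mathcal{N}} |\mathcal{W}_n|\Big) \right\rceil . \]
   Context: Model: a set $\mathcal{N}$ of $N\ge 2$ cooperating mobile devices want a common finite set $\mathcal{M}$ of packets. After a lossy first-stage cellular broadcast, device $n$ holds its Has set $\mathcal{H}_n\subseteq\mathcal{M}$ and misses its Wants set $\mathcal{W}_n=\mathcal{M}\setminus\mathcal{H}_n$; every packet of $\mathcal{M}$ is wanted by some device; $\mathcal{M}_c=\bigcap_{n\in\mathcal{N}}\mathcal{W}_n$. In the second stage time is slotted; in each slot the source (holding all packets) may broadcast one coded packet over cellular links to all devices, and simultaneously one device may broadcast over D2D links to all other devices one coded packet formed from packets it holds; all second-stage transmissions are received without loss. The packet completion time $T$ is the number of second-stage slots until every device has decoded all packets in its Wants set. *)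

theory Defs
  imports Complex_Main
begin

text \<open>Packet contents are given by x :: 'm \<Rightarrow> 'a over a finite
alphabet 'a.  A (deterministic, possibly nonlinear) coding scheme consists of
  src t   : the source's coded packet in slot t, a function of all packets of M;
  sched t : the device broadcasting over D2D in slot t (None: no D2D transmission);
  enc t d : the D2D coded packet of device d in slot t, a function of what d holds,
            i.e. its Has packets and everything received in earlier slots.\<close>

definition restr :: "('m \<Rightarrow> 'a) \<Rightarrow> 'm set \<Rightarrow> 'm \<Rightarrow> 'a option" where
  "restr x A = (\<lambda>m. if m \<in> A then Some (x m) else None)"

text \<open>Transcript of the first t second-stage slots (all transmissions are lossless
broadcasts, so every device receives every entry).\<close>
fun transcript ::
  "'m set \<Rightarrow> ('n \<Rightarrow> 'm set)
   \<Rightarrow> (nat \<Rightarrow> ('m \<Rightarrow> 'a option) \<Rightarrow> 'a)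
   \<Rightarrow> (nat \<Rightarrow> 'n option)
   \<Rightarrow> (nat \<Rightarrow> 'n \<Rightarrow> ('m \<Rightarrow> 'a option) \<Rightarrow> ('a \<times> 'a option) list \<Rightarrow> 'a)
   \<Rightarrow> ('m \<Rightarrow> 'a) \<Rightarrow> nat \<Rightarrow> ('a \<times> 'a option) list" where
  "transcript M H src sched enc x 0 = []"
| "transcript M H src sched enc x (Suc t) =
     transcript M H src sched enc x t @
     [(src t (restr x M),
       (case sched t of None \<Rightarrow> None
        | Some d \<Rightarrow> Some (enc t d (restr x (H d)) (transcript M H src sched enc x t))))]"

text \<open>Device n has decoded its Wants set M - H n after T slots: its Has packets together
with the received transmissions determine all packets it wants.\<close>
definition decoded_by ::
  "'m set \<Rightarrow> ('n \<Rightarrow> 'm set)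
   \<Rightarrow> (nat \<Rightarrow> ('m \<Rightarrow> 'a option) \<Rightarrow> 'a)
   \<Rightarrow> (nat \<Rightarrow> 'n option)
   \<Rightarrow> (nat \<Rightarrow> 'n \<Rightarrow> ('m \<Rightarrow> 'a option) \<Rightarrow> ('a \<times> 'a option) list \<Rightarrow> 'a)
   \<Rightarrow> 'n \<Rightarrow> nat \<Rightarrow> bool" where
  "decoded_by M H src sched enc n T \<longleftrightarrow>
     (\<forall>x y. restr x (H n) = restr y (H n) \<and>
            transcript M H src sched enc x T = transcript M H src sched enc y T
            \<longrightarrow> (\<forall>m \<in> M - H n. x m = y m))"

end

theory Submission
  imports Defs "HOL-Library.FuncSet"
begin

lemma tr_len: "length (transcript M H src sched enc x t) = t"
  by (induct t) auto

lemma tr_pat: "map (\<lambda>p. snd p = None) (transcript M H src sched enc x t)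
   = map (\<lambda>i. sched i = None) [0..<t]"
  by (induct t) (auto split: option.split)

lemma list_code_eq:
  "map h xs = map h ys \<Longrightarrow> map (\<lambda>p. snd p = None) xs = map (\<lambda>p. snd p = None) ys
   \<Longrightarrow> h = (\<lambda>p. (fst p, case snd p of None \<Rightarrow> c | Some b \<Rightarrow> b)) \<Longrightarrow> xs = ys"
proof (induct xs arbitrary: ys)
  case Nil then show ?case by simp
next
  case (Cons a xs)
  then obtain b ys' where ys: "ys = b # ys'" by (cases ys) auto
  with Cons show ?case
    by (cases a, cases b) (auto split: option.splits)
qed

lemma tr_fst_det:
  assumes "\<forall>t d. sched t = Some d \<longrightarrow> d \<in> N"
    and "\<forall>d\<in>N. restr x (H d) = restr y (H d)"
  shows "map fst (transcript M H src sched enc x t) = map fst (transcript M H src sched enc y t)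
    \<Longrightarrow> transcript M H src sched enc x t = transcript M H src sched enc y t"
proof (induct t)
  case 0 then show ?case by simp
next
  case (Suc t)
  have l: "length (map fst (transcript M H src sched enc x t)) = length (map fst (transcript M H src sched enc y t))"
    by (simp add: tr_len)
  from Suc.prems have "map fst (transcript M H src sched enc x t) = map fst (transcript M H src sched enc y t)
     \<and> src t (restr x M) = src t (restr y M)"
    using l by simp
  then have e: "transcript M H src sched enc x t = transcript M H src sched enc y t"
     and s: "src t (restr x M) = src t (restr y M)" using Suc.hyps by auto
  show ?case using e s assms by (auto split: option.split)
qed

lemma count_bound:
  fixes g :: "('m \<Rightarrow> 'a::finite) \<Rightarrow> 'b list"
  assumes "finite A" "finite B"
    and "inj_on g (PiE A (\<lambda>_. UNIV :: 'a set))"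
    and "\<And>f. f \<in> PiE A (\<lambda>_. UNIV) \<Longrightarrow> set (g f) \<subseteq> B \<and> length (g f) = T"
  shows "card (UNIV :: 'a set) ^ card A \<le> card B ^ T"
proof -
  have "card (PiE A (\<lambda>_. UNIV :: 'a set)) \<le> card {xs. set xs \<subseteq> B \<and> length xs = T}"
    apply (rule card_inj_on_le[OF assms(3)])
    using assms(4) apply blast
    using assms(2) by (rule finite_lists_length_eq)
  moreover have "card (PiE A (\<lambda>_. UNIV :: 'a set)) = card (UNIV :: 'a set) ^ card A"
    using assms(1) by (simp add: card_PiE)
  moreover have "card {xs. set xs \<subseteq> B \<and> length xs = T} = card B ^ T"
    by (rule card_lists_length_eq[OF assms(2)])
  ultimately show ?thesis by simp
qed

theorem corollary1:
  fixes N :: "'n set" and M :: "'m set" and H :: "'n \<Rightarrow> 'm set"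
    and src :: "nat \<Rightarrow> ('m \<Rightarrow> 'a option) \<Rightarrow> ('a::finite)"
    and sched :: "nat \<Rightarrow> 'n option"
    and enc :: "nat \<Rightarrow> 'n \<Rightarrow> ('m \<Rightarrow> 'a option) \<Rightarrow> ('a \<times> 'a option) list \<Rightarrow> 'a"
    and T :: nat
  assumes "finite N" and "card N \<ge> 2"
    and "finite M"
    and "\<forall>n\<in>N. H n \<subseteq> M"
    and "\<forall>m\<in>M. \<exists>n\<in>N. m \<notin> H n"
    and "card (UNIV :: 'a set) \<ge> 2"
    and "\<forall>t d. sched t = Some d \<longrightarrow> d \<in> N"
    and "\<forall>n\<in>N. decoded_by M H src sched enc n T"
  shows "int T \<ge> \<lceil>max (real (card (\<Inter>n\<in>N. M - H n)))
                      ((MAX n\<in>N. real (card (M - H n))) / 2)\<rceil>"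
proof -
  let ?q = "card (UNIV :: 'a set)"
  obtain c :: 'a where True by blast
  have q1: "1 < ?q" using assms(6) by linarith
  have Nne: "N \<noteq> {}" using assms(2) by auto
  then obtain n0 where n0: "n0 \<in> N" by blast
  define tr where "tr = transcript M H src sched enc"
  define ext where "ext = (\<lambda>(A::'m set) (f::'m \<Rightarrow> 'a) m. if m \<in> A then f m else c)"
  have restr_ext: "restr (ext A f) D = restr (ext A g) D" if "A \<inter> D = {}" for A D f g
    using that unfolding restr_def ext_def by (auto simp: fun_eq_iff)
  have dec: "f = g" if "n \<in> N" "A \<subseteq> M - H n" "f \<in> PiE A (\<lambda>_. UNIV)" "g \<in> PiE A (\<lambda>_. UNIV)"
      "tr (ext A f) T = tr (ext A g) T" for n A f g
  proof -
    have "restr (ext A f) (H n) = restr (ext A g) (H n)" using that(2) by (intro restr_ext) auto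
    with that assms(8) have "\<forall>m\<in>M - H n. ext A f m = ext A g m"
      unfolding decoded_by_def tr_def by blast
    then have "\<And>m. m \<in> A \<Longrightarrow> f m = g m" using that(2) unfolding ext_def
    proof -
      fix m assume h: "\<forall>m\<in>M - H n. (if m \<in> A then f m else c) = (if m \<in> A then g m else c)"
        "A \<subseteq> M - H n" "m \<in> A"
      then have "m \<in> M - H n" by blast
      with h(1) have "(if m \<in> A then f m else c) = (if m \<in> A then g m else c)" by blast
      with h(3) show "f m = g m" by simp
    qed
    then show ?thesis using that(3,4) by (rule PiE_ext[rotated 2])
  qed
  define Ac where "Ac = (\<Inter>n\<in>N. M - H n)"
  have Acsub: "Ac \<subseteq> M - H n0" using n0 unfolding Ac_def by auto
  have finAc: "finite Ac" using Acsub assms(3) finite_subset by blast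
  have b1: "card Ac \<le> T"
  proof -
    have "?q ^ card Ac \<le> ?q ^ T"
    proof (rule count_bound[where g = "\<lambda>f. map fst (tr (ext Ac f) T)" and B = UNIV, simplified])
      show "finite Ac" by (rule finAc)
      show "inj_on (\<lambda>f. map fst (tr (ext Ac f) T)) (PiE Ac (\<lambda>_. UNIV))"
      proof (rule inj_onI)
        fix f g assume f: "f \<in> PiE Ac (\<lambda>_. UNIV)" and g: "g \<in> PiE Ac (\<lambda>_. UNIV)"
          and e: "map fst (tr (ext Ac f) T) = map fst (tr (ext Ac g) T)"
        have "\<forall>d\<in>N. restr (ext Ac f) (H d) = restr (ext Ac g) (H d)"
        proof
          fix d assume "d \<in> N"
          then have "Ac \<inter> H d = {}" unfolding Ac_def by blast
          then show "restr (ext Ac f) (H d) = restr (ext Ac g) (H d)" by (rule restr_ext)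
        qed
        then have "tr (ext Ac f) T = tr (ext Ac g) T"
          unfolding tr_def by (rule tr_fst_det[OF assms(7)]) (use e in \<open>simp add: tr_def\<close>)
        then show "f = g" using dec[OF n0 Acsub f g] by blast
      qed
      show "\<And>f. length (tr (ext Ac f) T) = T" unfolding tr_def by (rule tr_len)
    qed
    then show ?thesis by (rule power_le_imp_le_exp[OF q1])
  qed
  have b2: "card (M - H n) \<le> 2 * T" if n: "n \<in> N" for n
  proof -
    define A where "A = M - H n"
    define h where "h = (\<lambda>p::'a \<times> 'a option. (fst p, case snd p of None \<Rightarrow> c | Some b \<Rightarrow> b))"
    have "?q ^ card A \<le> card (UNIV :: ('a \<times> 'a) set) ^ T"
    proof (rule count_bound[where g = "\<lambda>f. map h (tr (ext A f) T)" and B = UNIV, simplified])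
      show "finite A" unfolding A_def using assms(3) by simp
      show "inj_on (\<lambda>f. map h (tr (ext A f) T)) (PiE A (\<lambda>_. UNIV))"
      proof (rule inj_onI)
        fix f g assume f: "f \<in> PiE A (\<lambda>_. UNIV)" and g: "g \<in> PiE A (\<lambda>_. UNIV)"
          and e: "map h (tr (ext A f) T) = map h (tr (ext A g) T)"
        have "tr (ext A f) T = tr (ext A g) T"
          by (rule list_code_eq[OF e _ h_def]) (simp add: tr_def tr_pat)
        then show "f = g" using dec[OF n _ f g] A_def by blast
      qed
      show "\<And>f. length (tr (ext A f) T) = T" unfolding tr_def by (rule tr_len)
    qed
    also have "card (UNIV :: ('a \<times> 'a) set) = ?q * ?q"
      using card_cartesian_product[of "UNIV :: 'a set" "UNIV :: 'a set"] by (simp only: UNIV_Times_UNIV)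
    also have "(?q * ?q) ^ T = ?q ^ (2 * T)" by (simp add: power_mult power2_eq_square)
    finally show ?thesis unfolding A_def by (rule power_le_imp_le_exp[OF q1])
  qed
  have m2: "(MAX n\<in>N. real (card (M - H n))) \<le> 2 * real T"
  proof (subst Max_le_iff)
    show "finite ((\<lambda>n. real (card (M - H n))) ` N)" using assms(1) by simp
    show "(\<lambda>n. real (card (M - H n))) ` N \<noteq> {}" using Nne by simp
    show "\<forall>a\<in>(\<lambda>n. real (card (M - H n))) ` N. a \<le> 2 * real T"
    proof
      fix a assume "a \<in> (\<lambda>n. real (card (M - H n))) ` N"
      then obtain n where "n \<in> N" "a = real (card (M - H n))" by blast
      with b2[of n] show "a \<le> 2 * real T" by simp
    qed
  qed
  show ?thesis using b1 m2 unfolding Ac_def by (simp add: ceiling_le_iff)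
qed

end
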